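(* Let $n\ge1$, $l\ge n$, let $(a_{ik})$ be a real $l\times n$ matrix, let $E_1,\dots,E_l\subset\mathbb{R}^n$ be measurable sets of finite measure, and let $1\le t\le n$. Then $$\sup_{y_j\in\mathcal{S}_{e_t}(E_j),\,j=1,\dots,l}\det\Big(0,\sum_{i=1}^{l}a_{i1}y_i,\dots,\sum_{i=1}^{l}a_{in}y_i\Big)\le\sup_{y_j\in E_j,\,j=1,\dots,l}\det\Big(0,\sum_{i=1}^{l}a_{i1}y_i,\dots,\sum_{i=1}^{l}a_{in}y_i\Big).$$ In particular (taking appropriate matrices $(a_{ik})$), $\sup_{y_j\in\mathcal{S}_{e_t}(E_j)}\det(0,y_1,\dots,y_n)\le\sup_{y_j\in E_j}\det(0,y_1,\dots,y_n)$ and $\sup_{y_j\in\mathcal{S}_{e_t}(E_j)}\det(y_1,\dots,y_{n+1})\le\sup_{y_j\in E_j}\det(y_1,\dots,y_{n+1})$.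
   Context: $\{e_1,\dots,e_n\}$ is the standard basis of $\mathbb{R}^n$. For $z_1,\dots,z_n\in\mathbb{R}^n$, $\det(0,z_1,\dots,z_n)$ denotes $|\det M|$ where $M$ is the $n\times n$ matrix with columns $z_1,\dots,z_n$. For $y_1,\dots,y_{n+1}\in\mathbb{R}^n$, $\det(y_1,\dots,y_{n+1})$ denotes the absolute value of the determinant of the matrix with columns $y_1-y_{n+1},\dots,y_n-y_{n+1}$ (equal to $n!$ times the volume of the simplex with these vertices). For a unit vector $u\in\mathbb{R}^n$ and a measurable $A\subset\mathbb{R}^n$, the Steiner symmetrisation is $\mathcal{S}_u(A)=\{tu+y:\ y\in u^\perp,\ A\cap(\mathbb{R}u+y)\neq\emptyset,\ |t|\le |A\cap(\mathbb{R}u+y)|/2\}$, where $|A\cap(\mathbb{R}u+y)|$ is one-dimensional Lebesgue measure on the line $\mathbb{R}u+y$. *)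

theory Defs
  imports "HOL-Analysis.Analysis"
begin

text \<open>The one-dimensional measure of A on the line R u + y is the Lebesgue
  measure of the parameter set {s. s u + y in A} (u is a unit vector).\<close>
definition steiner :: "'a::euclidean_space \<Rightarrow> 'a set \<Rightarrow> 'a set" where
  "steiner u A = {t *\<^sub>R u + y | t y.
       y \<bullet> u = 0 \<and> A \<inter> range (\<lambda>s. s *\<^sub>R u + y) \<noteq> {} \<and>
       ennreal \<bar>t\<bar> \<le> emeasure lebesgue {s::real. s *\<^sub>R u + y \<in> A} / 2}"

definition det0 :: "('n::finite \<Rightarrow> real^'n) \<Rightarrow> real" where
  "det0 z = \<bar>det (\<chi> r k. z k $ r :: real^'n^'n)\<bar>"

end

theory Submission
  imports Defs
begin

lemma diam_lemma:
  fixes F :: "real set" and tt e :: real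
  assumes ne: "F \<noteq> {}" and m: "ennreal \<bar>tt\<bar> \<le> emeasure lebesgue F / 2" and e: "e > 0"
  shows "\<exists>a\<in>F. \<exists>b\<in>F. b - a > 2 * \<bar>tt\<bar> - e"
proof (rule ccontr)
  assume "\<not> ?thesis"
  hence H: "\<forall>a\<in>F. \<forall>b\<in>F. b - a \<le> 2 * \<bar>tt\<bar> - e" by (auto simp: not_less)
  define d where "d = 2 * \<bar>tt\<bar> - e"
  obtain x0 where x0: "x0 \<in> F" using ne by auto
  have d0: "d \<ge> 0" using H x0 unfolding d_def by force
  have bdd: "bdd_below F" unfolding bdd_below_def using H x0 unfolding d_def
    by (metis diff_le_eq add.commute)
  define c where "c = Inf F"
  have sub: "F \<subseteq> {c..c+d}"
  proof
    fix x assume x: "x \<in> F"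
    have "c \<le> x" unfolding c_def using bdd x by (simp add: cInf_lower)
    moreover have "x - d \<le> c" unfolding c_def
    proof (rule cInf_greatest[OF ne])
      fix a assume "a \<in> F" thus "x - d \<le> a" using H x unfolding d_def by force
    qed
    ultimately show "x \<in> {c..c+d}" by auto
  qed
  have "emeasure lebesgue F \<le> emeasure lebesgue {c..c+d}"
    by (rule emeasure_mono[OF sub]) simp
  also have "\<dots> = ennreal d" using d0 by simp
  finally have "emeasure lebesgue F \<le> ennreal d" .
  hence "ennreal \<bar>tt\<bar> \<le> ennreal d / 2" using m
    by (meson divide_right_mono_ennreal order.trans)
  also have "ennreal d / 2 = ennreal (d/2)" using d0 divide_ennreal[of d 2] by simp
  finally have "\<bar>tt\<bar> \<le> d/2" using d0 by (simp add: ennreal_le_iff)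
  hence "2*\<bar>tt\<bar> \<le> d" by simp
  thus False using e unfolding d_def by simp
qed

lemma arith_help:
  fixes a T X D m dL e :: real
  assumes "a \<le> T" "D \<le> 2 * m" "2 * T - dL \<le> D" "dL \<le> e" "e > 0"
  shows "a \<le> m + e"
  using assms by linarith

lemma oneD:
  fixes F :: "'l::finite \<Rightarrow> real set" and lam tt :: "'l \<Rightarrow> real"
  assumes ne: "\<And>i. F i \<noteq> {}" and m: "\<And>i. ennreal \<bar>tt i\<bar> \<le> emeasure lebesgue (F i) / 2"
  shows "ereal \<bar>\<Sum>i\<in>UNIV. lam i * tt i\<bar> \<le> (SUP s\<in>Pi UNIV F. ereal \<bar>\<Sum>i\<in>UNIV. lam i * s i\<bar>)"
    (is "_ \<le> ?S")
proof (rule ereal_le_epsilon2)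
  fix e :: real assume e: "0 < e"
  define L where "L = (\<Sum>i\<in>UNIV. \<bar>lam i\<bar>)"
  have L0: "L \<ge> 0" unfolding L_def by (simp add: sum_nonneg)
  define dl where "dl = e / (L + 1)"
  have dl: "dl > 0" using e L0 unfolding dl_def by simp
  have "\<forall>i. \<exists>ab. fst ab \<in> F i \<and> snd ab \<in> F i \<and> snd ab - fst ab > 2 * \<bar>tt i\<bar> - dl"
    using diam_lemma[OF ne m dl] by force
  then obtain ab where ab: "\<And>i. fst (ab i) \<in> F i \<and> snd (ab i) \<in> F i \<and> snd (ab i) - fst (ab i) > 2 * \<bar>tt i\<bar> - dl"
    by metis
  define sp where "sp i = (if lam i \<ge> 0 then snd (ab i) else fst (ab i))" for i
  define sm where "sm i = (if lam i \<ge> 0 then fst (ab i) else snd (ab i))" for i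
  have spF: "sp \<in> Pi UNIV F" and smF: "sm \<in> Pi UNIV F" using ab unfolding sp_def sm_def by auto
  have diff: "(\<Sum>i\<in>UNIV. lam i * sp i) - (\<Sum>i\<in>UNIV. lam i * sm i) = (\<Sum>i\<in>UNIV. \<bar>lam i\<bar> * (snd (ab i) - fst (ab i)))"
    unfolding sum_subtractf[symmetric] by (rule sum.cong) (auto simp: sp_def sm_def algebra_simps)
  have f1: "(\<Sum>i\<in>UNIV. \<bar>lam i\<bar> * (2 * \<bar>tt i\<bar> - dl)) \<le> (\<Sum>i\<in>UNIV. \<bar>lam i\<bar> * (snd (ab i) - fst (ab i)))"
    using ab by (intro sum_mono mult_left_mono) (auto intro: less_imp_le)
  have f2: "(\<Sum>i\<in>UNIV. \<bar>lam i\<bar> * (2 * \<bar>tt i\<bar> - dl)) = 2 * (\<Sum>i\<in>UNIV. \<bar>lam i\<bar> * \<bar>tt i\<bar>) - dl * L"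
    unfolding L_def by (simp add: algebra_simps sum_subtractf sum_distrib_left sum_distrib_right)
  have f3: "\<bar>\<Sum>i\<in>UNIV. lam i * tt i\<bar> \<le> (\<Sum>i\<in>UNIV. \<bar>lam i\<bar> * \<bar>tt i\<bar>)"
    by (rule order.trans[OF sum_abs]) (simp add: abs_mult)
  have f4: "dl * L \<le> e"
  proof -
    have "dl * L \<le> dl * (L + 1)" using dl by simp
    also have "\<dots> = e" unfolding dl_def using L0 by simp
    finally show ?thesis .
  qed
  have key: "\<bar>\<Sum>i\<in>UNIV. lam i * tt i\<bar> \<le> max \<bar>\<Sum>i\<in>UNIV. lam i * sp i\<bar> \<bar>\<Sum>i\<in>UNIV. lam i * sm i\<bar> + e"
  proof -
    have "\<And>P M::real. P - M \<le> 2 * max \<bar>P\<bar> \<bar>M\<bar>" by (auto simp: max_def abs_if)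
    note pm = this[of "\<Sum>i\<in>UNIV. lam i * sp i" "\<Sum>i\<in>UNIV. lam i * sm i"]
    show ?thesis by (rule arith_help[OF f3 pm f1[unfolded f2 diff[symmetric]] f4 e])
  qed
  have "ereal \<bar>\<Sum>i\<in>UNIV. lam i * sp i\<bar> \<le> ?S" using spF by (rule SUP_upper)
  moreover have "ereal \<bar>\<Sum>i\<in>UNIV. lam i * sm i\<bar> \<le> ?S" using smF by (rule SUP_upper)
  ultimately have "ereal (max \<bar>\<Sum>i\<in>UNIV. lam i * sp i\<bar> \<bar>\<Sum>i\<in>UNIV. lam i * sm i\<bar>) \<le> ?S"
    by (simp add: max_def)
  hence "ereal (max \<bar>\<Sum>i\<in>UNIV. lam i * sp i\<bar> \<bar>\<Sum>i\<in>UNIV. lam i * sm i\<bar>) + ereal e \<le> ?S + ereal e"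
    by (simp add: add_right_mono)
  moreover have "ereal \<bar>\<Sum>i\<in>UNIV. lam i * tt i\<bar> \<le> ereal (max \<bar>\<Sum>i\<in>UNIV. lam i * sp i\<bar> \<bar>\<Sum>i\<in>UNIV. lam i * sm i\<bar>) + ereal e"
    using key by (metis ereal_less_eq(3) plus_ereal.simps(1))
  ultimately show "ereal \<bar>\<Sum>i\<in>UNIV. lam i * tt i\<bar> \<le> ?S + ereal e" by (rule order.trans[rotated])
qed

lemma det_reduce:
  fixes a :: "real^'n^'l" and p :: "'l \<Rightarrow> real^'n" and s :: "'l \<Rightarrow> real" and t :: 'n
  assumes p: "\<And>i. p i $ t = 0"
  shows "det0 (\<lambda>k. \<Sum>i\<in>UNIV. a$i$k *\<^sub>R (s i *\<^sub>R axis t 1 + p i)) =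
    \<bar>\<Sum>i\<in>UNIV. s i * det (\<chi> r. if r = t then (\<chi> k. a$i$k) else (\<chi> k. \<Sum>j\<in>UNIV. a$j$k * p j $ r) :: real^'n^'n)\<bar>"
proof -
  define c where "c = ((\<chi> r. (\<chi> k. \<Sum>j\<in>UNIV. a$j$k * p j $ r)) :: real^'n^'n)"
  have M: "(\<chi> r k. (\<Sum>i\<in>UNIV. a$i$k *\<^sub>R (s i *\<^sub>R axis t 1 + p i)) $ r :: real^'n^'n) =
     (\<chi> r. if r = t then (\<Sum>i\<in>UNIV. s i *s (\<chi> k. a$i$k)) else c $ r)"
    by (simp add: vec_eq_iff c_def sum_component axis_def p algebra_simps)
  have "det (\<chi> r. if r = t then (\<Sum>i\<in>UNIV. s i *s (\<chi> k. a$i$k)) else c $ r) =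
     (\<Sum>i\<in>UNIV. det (\<chi> r. if r = t then s i *s (\<chi> k. a$i$k) else c $ r))"
    by (rule det_linear_row_sum) simp
  also have "\<dots> = (\<Sum>i\<in>UNIV. s i * det (\<chi> r. if r = t then (\<chi> k. a$i$k) else c $ r))"
    by (rule sum.cong[OF refl], rule det_row_mul)
  finally show ?thesis unfolding det0_def M c_def vec_lambda_beta by simp
qed

theorem mainTheorem8:
  fixes a :: "real^'n^'l" and E :: "'l \<Rightarrow> (real^'n) set" and t :: 'n
  assumes "CARD('l) \<ge> CARD('n)"
    and "\<And>j. E j \<in> sets lebesgue"
    and "\<And>j. emeasure lebesgue (E j) < \<infinity>"
  shows "(SUP y \<in> Pi UNIV (\<lambda>j. steiner (axis t 1) (E j)).
            ereal (det0 (\<lambda>k. \<Sum>i\<in>UNIV. a $ i $ k *\<^sub>R y i)))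
         \<le> (SUP y \<in> Pi UNIV E.
            ereal (det0 (\<lambda>k. \<Sum>i\<in>UNIV. a $ i $ k *\<^sub>R y i)))" (is "_ \<le> ?R")
proof (rule SUP_least)
  fix y assume y: "y \<in> Pi UNIV (\<lambda>j. steiner (axis t 1) (E j))"
  have "\<forall>i. \<exists>tp. y i = fst tp *\<^sub>R axis t 1 + snd tp \<and> snd tp \<bullet> axis t 1 = 0 \<and>
      E i \<inter> range (\<lambda>s. s *\<^sub>R axis t 1 + snd tp) \<noteq> {} \<and>
      ennreal \<bar>fst tp\<bar> \<le> emeasure lebesgue {s. s *\<^sub>R axis t 1 + snd tp \<in> E i} / 2"
  proof
    fix i
    have "y i \<in> steiner (axis t 1) (E i)" using y by auto
    then show "\<exists>tp. y i = fst tp *\<^sub>R axis t 1 + snd tp \<and> snd tp \<bullet> axis t 1 = 0 \<and>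
      E i \<inter> range (\<lambda>s. s *\<^sub>R axis t 1 + snd tp) \<noteq> {} \<and>
      ennreal \<bar>fst tp\<bar> \<le> emeasure lebesgue {s. s *\<^sub>R axis t 1 + snd tp \<in> E i} / 2"
    proof -
      assume "y i \<in> steiner (axis t 1) (E i)"
      then obtain t0 y0 where "y i = t0 *\<^sub>R axis t 1 + y0" "y0 \<bullet> axis t 1 = 0"
        "E i \<inter> range (\<lambda>s. s *\<^sub>R axis t 1 + y0) \<noteq> {}"
        "ennreal \<bar>t0\<bar> \<le> emeasure lebesgue {s. s *\<^sub>R axis t 1 + y0 \<in> E i} / 2"
        unfolding steiner_def by blast
      thus ?thesis by (intro exI[of _ "(t0, y0)"]) simp
    qed
  qed
  then obtain tp where tp: "\<And>i. y i = fst (tp i) *\<^sub>R axis t 1 + snd (tp i) \<and> snd (tp i) \<bullet> axis t 1 = 0 \<and>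
      E i \<inter> range (\<lambda>s. s *\<^sub>R axis t 1 + snd (tp i)) \<noteq> {} \<and>
      ennreal \<bar>fst (tp i)\<bar> \<le> emeasure lebesgue {s. s *\<^sub>R axis t 1 + snd (tp i) \<in> E i} / 2"
    by metis
  define tt where "tt i = fst (tp i)" for i
  define p where "p i = snd (tp i)" for i
  define F where "F i = {s. s *\<^sub>R axis t 1 + p i \<in> E i}" for i
  have p0: "\<And>i. p i $ t = 0" proof -
    fix i have "snd (tp i) \<bullet> axis t 1 = 0" using tp by blast
    thus "p i $ t = 0" unfolding p_def by (simp add: inner_axis)
  qed
  have yeq: "y = (\<lambda>i. tt i *\<^sub>R axis t 1 + p i)" using tp unfolding tt_def p_def by auto
  have Fne: "\<And>i. F i \<noteq> {}" using tp unfolding F_def p_def by auto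
  have Fm: "\<And>i. ennreal \<bar>tt i\<bar> \<le> emeasure lebesgue (F i) / 2" using tp unfolding F_def p_def tt_def by auto
  define lam where "lam i = det (\<chi> r. if r = t then (\<chi> k. a$i$k) else (\<chi> k. \<Sum>j\<in>UNIV. a$j$k * p j $ r) :: real^'n^'n)" for i
  have red: "\<And>s. det0 (\<lambda>k. \<Sum>i\<in>UNIV. a$i$k *\<^sub>R (s i *\<^sub>R axis t 1 + p i)) = \<bar>\<Sum>i\<in>UNIV. lam i * s i\<bar>"
    unfolding lam_def by (subst det_reduce[OF p0]) (simp add: mult.commute)
  have "ereal (det0 (\<lambda>k. \<Sum>i\<in>UNIV. a $ i $ k *\<^sub>R y i)) = ereal \<bar>\<Sum>i\<in>UNIV. lam i * tt i\<bar>"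
    unfolding yeq red ..
  also have "\<dots> \<le> (SUP s\<in>Pi UNIV F. ereal \<bar>\<Sum>i\<in>UNIV. lam i * s i\<bar>)"
    by (rule oneD[OF Fne Fm])
  also have "\<dots> \<le> ?R"
  proof (rule SUP_least)
    fix s assume s: "s \<in> Pi UNIV F"
    have "(\<lambda>i. s i *\<^sub>R axis t 1 + p i) \<in> Pi UNIV E" using s unfolding F_def by auto
    hence "ereal (det0 (\<lambda>k. \<Sum>i\<in>UNIV. a$i$k *\<^sub>R (s i *\<^sub>R axis t 1 + p i))) \<le> ?R"
      by (rule SUP_upper)
    thus "ereal \<bar>\<Sum>i\<in>UNIV. lam i * s i\<bar> \<le> ?R" unfolding red .
  qed
  finally show "ereal (det0 (\<lambda>k. \<Sum>i\<in>UNIV. a $ i $ k *\<^sub>R y i)) \<le> ?R" .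
qed

end
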